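(* Let $P$ be a finite set of points in the plane, let $t>1$, $t'\ge t$, and let $k$ be any positive integer. If $h$ is set to the diameter (maximum hop distance) of the dual graph $G_T$ of the quad-tree $T$ built on $P$ with leaf capacity $k$, then the graph $H$ output by \textsc{Fast-Sparse-Spanner}$(P,t,t',k,h)$ is a $t$-spanner of $P$, i.e., for every pair of points $p,q\in P$ the shortest-path distance between $p$ and $q$ in $H$ is at most $t|pq|$.
   Context: All graphs are Euclidean: an edge $\{u,v\}$ has weight $|uv|$. A $t$-path for $u,v$ in $H$ is a path between $u,v$ of length at most $t|uv|$. Region quad-tree with leaf capacity $k$: the root corresponds to the bounding box of $P$; any node whose square contains more than $k$ points of $P$ is split into four equal quadrants (four children), recursively; nodes with at most $k$ points are leaves. The dual graph $G_T$ has the leaves of $T$ as vertices, two leaves adjacent iff their squares intersect. \textsc{Fast-Sparse-Spanner}$(P,t,t',k,h)$: (1) Build $T$ on $P$ with leaf capacity $k$; $H$ empty on $P$. (2) For every non-empty leaf $\sigma$, add to $H$ the edges of the greedy $t$-spanner on $P\cap\sigma$ (sort pairs of $P\cap\sigma$ by distance; add $\{p,q\}$ if the current shortest-path distance exceeds $t|pq|$); leader $\ell_\sigma$ = a point of $P\cap\sigma$ closest to the center of the bounding box of $P\cap\sigma$. (3) Add to $H$ the edges of a WSPD $t'$-spanner on the leaders (one edge per pair of a well-separated pair decomposition with separation ratio $4(t'+1)/(t'-1)$). (4) For each pair of adjacent non-empty leaves in $G_T$ not yet merged, merge them. (5) For $i=2,\dots,h$, for each non-empty leaf $\sigma$ and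 each non-empty leaf $\sigma'$ at exactly $i$ hops from $\sigma$ in $G_T$, merge them if not yet merged. Merging $\sigma_i,\sigma_j$ with point sets $P_i,P_j$: process all pairs $(u,v)\in P_i\times P_j$ in some order, maintaining a set of bridges (paths in $H$ between a point of $P_i$ and a point of $P_j$); for each pair: skip it if some bridge $x\leadsto y$ satisfies $t|ux|+|x\leadsto y|+t|yv|\le t|uv|$; otherwise look for a $t$-path from $u$ to $v$ in $H$ (by a greedy walk and then an exact shortest path computation via $A^*$); if one is found store it as a bridge, else add the edge $\{u,v\}$ to $H$ and to the bridges. *)

theory Defs
  imports "HOL-Analysis.Analysis"
begin

type_synonym pt = "real \<times> real"
type_synonym graph = "pt set set"   (* undirected edges {u,v}; weight = dist u v *)

definition is_path :: "graph \<Rightarrow> pt list \<Rightarrow> pt \<Rightarrow> pt \<Rightarrow> bool" where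
  "is_path E ps u v \<longleftrightarrow> ps \<noteq> [] \<and> hd ps = u \<and> last ps = v \<and>
     (\<forall>i < length ps - 1. {ps ! i, ps ! Suc i} \<in> E)"

definition path_len :: "pt list \<Rightarrow> real" where
  "path_len ps = (\<Sum>i < length ps - 1. dist (ps ! i) (ps ! Suc i))"

definition is_tpath :: "graph \<Rightarrow> real \<Rightarrow> pt list \<Rightarrow> pt \<Rightarrow> pt \<Rightarrow> bool" where
  "is_tpath E t ps u v \<longleftrightarrow> is_path E ps u v \<and> path_len ps \<le> t * dist u v"

definition has_tpath :: "graph \<Rightarrow> real \<Rightarrow> pt \<Rightarrow> pt \<Rightarrow> bool" where
  "has_tpath E t u v \<longleftrightarrow> (\<exists>ps. is_tpath E t ps u v)"

definition t_spanner :: "pt set \<Rightarrow> real \<Rightarrow> graph \<Rightarrow> bool" where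
  "t_spanner P t E \<longleftrightarrow> (\<forall>p\<in>P. \<forall>q\<in>P. has_tpath E t p q)"

definition greedy_step :: "real \<Rightarrow> graph \<Rightarrow> pt \<times> pt \<Rightarrow> graph" where
  "greedy_step t E pq =
     (if has_tpath E t (fst pq) (snd pq) then E else insert {fst pq, snd pq} E)"

definition greedy_spanner :: "pt set \<Rightarrow> real \<Rightarrow> graph \<Rightarrow> bool" where
  "greedy_spanner S t G \<longleftrightarrow>
     (\<exists>ps. distinct (map (\<lambda>(p,q). {p,q}) ps) \<and>
        set (map (\<lambda>(p,q). {p,q}) ps) = {{p,q} | p q. p \<in> S \<and> q \<in> S \<and> p \<noteq> q} \<and>
        (\<forall>(p,q) \<in> set ps. p \<noteq> q) \<and>
        sorted (map (\<lambda>(p,q). dist p q) ps) \<and>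
        G = foldl (greedy_step t) {} ps)"

definition root_x :: "pt set \<Rightarrow> real" where "root_x P = Min (fst ` P)"
definition root_y :: "pt set \<Rightarrow> real" where "root_y P = Min (snd ` P)"
definition root_side :: "pt set \<Rightarrow> real" where
  "root_side P = max (Max (fst ` P) - Min (fst ` P)) (Max (snd ` P) - Min (snd ` P))"

text \<open>Node (d,i,j): the square at depth d with column i and row j (closed square).\<close>
definition qsq :: "pt set \<Rightarrow> nat \<times> nat \<times> nat \<Rightarrow> pt set" where
  "qsq P = (\<lambda>(d,i,j). {(x,y).
      root_x P + real i * root_side P / 2^d \<le> x \<and> x \<le> root_x P + real (i+1) * root_side P / 2^d \<and>
      root_y P + real j * root_side P / 2^d \<le> y \<and> y \<le> root_y P + real (j+1) * root_side P / 2^d})"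

definition qt_node :: "pt set \<Rightarrow> nat \<Rightarrow> nat \<times> nat \<times> nat \<Rightarrow> bool" where
  "qt_node P k = (\<lambda>(d,i,j). i < 2^d \<and> j < 2^d \<and>
      (\<forall>d' < d. k < card (P \<inter> qsq P (d', i div 2^(d-d'), j div 2^(d-d')))))"

definition qt_leaf :: "pt set \<Rightarrow> nat \<Rightarrow> nat \<times> nat \<times> nat \<Rightarrow> bool" where
  "qt_leaf P k n \<longleftrightarrow> qt_node P k n \<and> card (P \<inter> qsq P n) \<le> k"

definition ne_leaf :: "pt set \<Rightarrow> nat \<Rightarrow> nat \<times> nat \<times> nat \<Rightarrow> bool" where
  "ne_leaf P k n \<longleftrightarrow> qt_leaf P k n \<and> P \<inter> qsq P n \<noteq> {}"

definition qt_adj :: "pt set \<Rightarrow> nat \<Rightarrow> nat \<times> nat \<times> nat \<Rightarrow> nat \<times> nat \<times> nat \<Rightarrow> bool" where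
  "qt_adj P k a b \<longleftrightarrow> qt_leaf P k a \<and> qt_leaf P k b \<and> a \<noteq> b \<and> qsq P a \<inter> qsq P b \<noteq> {}"

definition qt_hop :: "pt set \<Rightarrow> nat \<Rightarrow> nat \<times> nat \<times> nat \<Rightarrow> nat \<times> nat \<times> nat \<Rightarrow> nat" where
  "qt_hop P k a b = (LEAST n. (qt_adj P k ^^ n) a b)"

definition qt_diameter :: "pt set \<Rightarrow> nat \<Rightarrow> nat" where
  "qt_diameter P k = Max {qt_hop P k a b | a b. qt_leaf P k a \<and> qt_leaf P k b}"

definition bbox_center :: "pt set \<Rightarrow> pt" where
  "bbox_center S = ((Min (fst ` S) + Max (fst ` S)) / 2, (Min (snd ` S) + Max (snd ` S)) / 2)"

definition is_leader :: "pt set \<Rightarrow> pt \<Rightarrow> bool" where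
  "is_leader S l \<longleftrightarrow> l \<in> S \<and> (\<forall>q\<in>S. dist l (bbox_center S) \<le> dist q (bbox_center S))"

definition well_separated :: "real \<Rightarrow> pt set \<Rightarrow> pt set \<Rightarrow> bool" where
  "well_separated s A B \<longleftrightarrow> (\<exists>cA cB r. r \<ge> 0 \<and> A \<subseteq> cball cA r \<and> B \<subseteq> cball cB r \<and>
      cball cA r \<inter> cball cB r = {} \<and> dist cA cB - 2 * r \<ge> s * r)"

definition is_wspd :: "pt set \<Rightarrow> real \<Rightarrow> (pt set \<times> pt set) set \<Rightarrow> bool" where
  "is_wspd L s W \<longleftrightarrow> finite W \<and>
     (\<forall>(A,B)\<in>W. A \<noteq> {} \<and> B \<noteq> {} \<and> A \<subseteq> L \<and> B \<subseteq> L \<and> well_separated s A B) \<and>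
     (\<forall>p\<in>L. \<forall>q\<in>L. p \<noteq> q \<longrightarrow>
        card {(A,B) \<in> W. (p \<in> A \<and> q \<in> B) \<or> (q \<in> A \<and> p \<in> B)} = 1)"

definition wspd_spanner :: "pt set \<Rightarrow> real \<Rightarrow> graph \<Rightarrow> bool" where
  "wspd_spanner L s E \<longleftrightarrow> (\<exists>W f. is_wspd L s W \<and>
     (\<forall>w\<in>W. fst (f w) \<in> fst w \<and> snd (f w) \<in> snd w) \<and>
     E = (\<lambda>w. {fst (f w), snd (f w)}) ` W)"

text \<open>One step of merging: process pair (u,v); state = (H, set of bridges).\<close>
definition merge_step :: "real \<Rightarrow> graph \<times> pt list set \<Rightarrow> pt \<times> pt \<Rightarrow> graph \<times> pt list set \<Rightarrow> bool" where
  "merge_step t st uv st' \<longleftrightarrow>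
     (let E = fst st; B = snd st; u = fst uv; v = snd uv in
      if (\<exists>br\<in>B. t * dist u (hd br) + path_len br + t * dist (last br) v \<le> t * dist u v)
      then st' = st
      else if has_tpath E t u v
      then (\<exists>ps. is_tpath E t ps u v \<and> st' = (E, insert ps B))
      else st' = (insert {u,v} E, insert [u,v] B))"

inductive merge_run :: "real \<Rightarrow> (pt \<times> pt) list \<Rightarrow> graph \<times> pt list set \<Rightarrow> graph \<times> pt list set \<Rightarrow> bool"
  for t where
  nil: "merge_run t [] st st"
| cons: "merge_step t st uv st1 \<Longrightarrow> merge_run t ps st1 st2 \<Longrightarrow> merge_run t (uv # ps) st st2"

definition merge_leaves :: "real \<Rightarrow> pt set \<Rightarrow> pt set \<Rightarrow> graph \<Rightarrow> graph \<Rightarrow> bool" where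
  "merge_leaves t Qi Qj E E' \<longleftrightarrow>
     (\<exists>ps B'. distinct ps \<and> set ps = Qi \<times> Qj \<and> merge_run t ps (E, {}) (E', B'))"

inductive merges_run :: "pt set \<Rightarrow> real \<Rightarrow> ((nat \<times> nat \<times> nat) \<times> (nat \<times> nat \<times> nat)) list \<Rightarrow> graph \<Rightarrow> graph \<Rightarrow> bool"
  for P t where
  nil: "merges_run P t [] E E"
| cons: "merge_leaves t (P \<inter> qsq P a) (P \<inter> qsq P b) E E1 \<Longrightarrow> merges_run P t ls E1 E2 \<Longrightarrow>
         merges_run P t ((a,b) # ls) E E2"

definition merge_schedule :: "pt set \<Rightarrow> nat \<Rightarrow> nat \<Rightarrow> ((nat \<times> nat \<times> nat) \<times> (nat \<times> nat \<times> nat)) list \<Rightarrow> bool" where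
  "merge_schedule P k h ls \<longleftrightarrow>
     distinct (map (\<lambda>(a,b). {a,b}) ls) \<and>
     set (map (\<lambda>(a,b). {a,b}) ls) =
        {{a,b} | a b. ne_leaf P k a \<and> ne_leaf P k b \<and> a \<noteq> b \<and> qt_hop P k a b \<le> h} \<and>
     (\<forall>(a,b) \<in> set ls. a \<noteq> b) \<and>
     sorted (map (\<lambda>(a,b). qt_hop P k a b) ls)"

section \<open>Fast-Sparse-Spanner: H is a possible output\<close>

definition fss_output :: "pt set \<Rightarrow> real \<Rightarrow> real \<Rightarrow> nat \<Rightarrow> nat \<Rightarrow> graph \<Rightarrow> bool" where
  "fss_output P t t' k h H \<longleftrightarrow>
     (\<exists>gs ld Ew ls.
        (\<forall>\<sigma>. ne_leaf P k \<sigma> \<longrightarrow> greedy_spanner (P \<inter> qsq P \<sigma>) t (gs \<sigma>)) \<and>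
        (\<forall>\<sigma>. ne_leaf P k \<sigma> \<longrightarrow> is_leader (P \<inter> qsq P \<sigma>) (ld \<sigma>)) \<and>
        wspd_spanner (ld ` {\<sigma>. ne_leaf P k \<sigma>}) (4 * (t' + 1) / (t' - 1)) Ew \<and>
        merge_schedule P k h ls \<and>
        merges_run P t ls ((\<Union>\<sigma>\<in>{\<sigma>. ne_leaf P k \<sigma>}. gs \<sigma>) \<union> Ew) H)"

end

theory Submission
  imports Defs
begin

fun ep :: "graph \<Rightarrow> pt list \<Rightarrow> bool" where
  "ep E (a # b # r) = ({a, b} \<in> E \<and> ep E (b # r))"
| "ep E _ = True"

fun pl :: "pt list \<Rightarrow> real" where
  "pl (a # b # r) = dist a b + pl (b # r)"
| "pl _ = 0"

lemma ep_iff: "ep E ps \<longleftrightarrow> (\<forall>i<length ps - 1. {ps!i, ps!Suc i} \<in> E)"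
  by (induction E ps rule: ep.induct) (auto simp: All_less_Suc2)

lemma pl_eq: "path_len ps = pl ps"
  unfolding path_len_def
  by (induction ps rule: pl.induct) (simp_all del: sum.lessThan_Suc add: sum.lessThan_Suc_shift)

lemma is_path_iff: "is_path E ps u v \<longleftrightarrow> ps \<noteq> [] \<and> hd ps = u \<and> last ps = v \<and> ep E ps"
  unfolding is_path_def ep_iff by simp

lemma ep_append: "ep E (xs @ y # ys) \<longleftrightarrow> ep E (xs @ [y]) \<and> ep E (y # ys)"
  by (induction xs rule: ep.induct) auto

lemma pl_append: "pl (xs @ y # ys) = pl (xs @ [y]) + pl (y # ys)"
  by (induction xs rule: pl.induct) auto

lemma ep_rev: "ep E (rev ps) = ep E ps"
proof (induction ps)
  case Nil then show ?case by simp
next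
  case (Cons a ps)
  show ?case
  proof (cases ps)
    case Nil then show ?thesis by simp
  next
    case (Cons b r)
    have "ep E (rev (a # ps)) = ep E (rev r @ b # [a])" using Cons by simp
    also have "\<dots> = (ep E (rev r @ [b]) \<and> {b, a} \<in> E)" by (subst ep_append) simp
    also have "\<dots> = (ep E (rev ps) \<and> {a, b} \<in> E)" using Cons by (simp add: insert_commute)
    also have "\<dots> = (ep E ps \<and> {a, b} \<in> E)" using \<open>ep E (rev ps) = ep E ps\<close> by simp
    also have "\<dots> = ep E (a # ps)" using Cons by auto
    finally show ?thesis .
  qed
qed

lemma pl_rev: "pl (rev ps) = pl ps"
proof (induction ps)
  case Nil then show ?case by simp
next
  case (Cons a ps)
  show ?case
  proof (cases ps)
    case Nil then show ?thesis by simp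
  next
    case (Cons b r)
    have "pl (rev (a # ps)) = pl (rev r @ b # [a])" using Cons by simp
    also have "\<dots> = pl (rev r @ [b]) + dist b a" by (subst pl_append) simp
    also have "\<dots> = pl (rev ps) + dist a b" using Cons by (simp add: dist_commute)
    also have "\<dots> = pl ps + dist a b" using \<open>pl (rev ps) = pl ps\<close> by simp
    also have "\<dots> = pl (a # ps)" using Cons by simp
    finally show ?thesis .
  qed
qed

lemma tpath_rev: "has_tpath E t u v \<Longrightarrow> has_tpath E t v u"
proof -
  assume "has_tpath E t u v"
  then obtain ps where "ps \<noteq> []" "hd ps = u" "last ps = v" "ep E ps" "pl ps \<le> t * dist u v"
    unfolding has_tpath_def is_tpath_def is_path_iff pl_eq by blast
  then have "is_tpath E t (rev ps) v u"
    unfolding is_tpath_def is_path_iff pl_eq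
    by (simp add: ep_rev pl_rev hd_rev last_rev dist_commute)
  then show ?thesis unfolding has_tpath_def by blast
qed

lemma path_cat:
  assumes "is_path E ps u w" "is_path E qs w v"
  shows "is_path E (ps @ tl qs) u v \<and> path_len (ps @ tl qs) = path_len ps + path_len qs"
proof -
  obtain ps0 where ps: "ps = ps0 @ [w]" using assms(1) unfolding is_path_iff
    by (metis append_butlast_last_id)
  obtain qs' where qs: "qs = w # qs'" using assms(2) unfolding is_path_iff
    by (metis list.collapse)
  have e: "ps @ tl qs = ps0 @ w # qs'" using ps qs by simp
  have A: "ep E (ps0 @ [w])" "ep E (w # qs')" "hd (ps0 @ [w]) = u" "last (w # qs') = v"
    using assms unfolding is_path_iff ps qs by auto
  have "hd (ps0 @ w # qs') = u" using A(3) by (cases ps0) auto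
  moreover have "last (ps0 @ w # qs') = v" using A(4) by simp
  moreover have "ep E (ps0 @ w # qs')" using A(1,2) ep_append by blast
  moreover have "pl (ps0 @ w # qs') = pl (ps0 @ [w]) + pl (w # qs')" by (rule pl_append)
  ultimately show ?thesis unfolding e is_path_iff pl_eq ps qs by simp
qed

lemma path_mono: "is_path E ps u v \<Longrightarrow> E \<subseteq> E' \<Longrightarrow> is_path E' ps u v"
  unfolding is_path_def by blast

lemma tpath_mono: "has_tpath E t u v \<Longrightarrow> E \<subseteq> E' \<Longrightarrow> has_tpath E' t u v"
  unfolding has_tpath_def is_tpath_def using path_mono by blast

lemma tpath_refl: "has_tpath E t u u"
  unfolding has_tpath_def is_tpath_def is_path_def path_len_def
  by (rule exI[of _ "[u]"]) simp

lemma tpath_edge: "t \<ge> 1 \<Longrightarrow> {u, v} \<in> E \<Longrightarrow> is_tpath E t [u, v] u v"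
  unfolding is_tpath_def is_path_iff pl_eq using mult_right_mono[of 1 t "dist u v"] by simp


lemma foldl_greedy:
  assumes "t \<ge> 1"
  shows "E \<subseteq> foldl (greedy_step t) E ps \<and>
    (\<forall>(p,q)\<in>set ps. has_tpath (foldl (greedy_step t) E ps) t p q)"
proof (induction ps arbitrary: E)
  case Nil then show ?case by simp
next
  case (Cons x ps)
  obtain p q where x: "x = (p, q)" by (metis surj_pair)
  have 1: "E \<subseteq> greedy_step t E x" unfolding greedy_step_def by auto
  have 2: "has_tpath (greedy_step t E x) t p q"
  proof (cases "has_tpath E t p q")
    case True then show ?thesis unfolding greedy_step_def x by simp
  next
    case False
    then have "greedy_step t E x = insert {p, q} E" unfolding greedy_step_def x by simp
    have "is_tpath (insert {p,q} E) t [p,q] p q" by (rule tpath_edge[OF assms]) simp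
    then show ?thesis using \<open>greedy_step t E x = insert {p, q} E\<close> unfolding has_tpath_def by auto
  qed
  have IH: "greedy_step t E x \<subseteq> foldl (greedy_step t) (greedy_step t E x) ps \<and>
    (\<forall>(p,q)\<in>set ps. has_tpath (foldl (greedy_step t) (greedy_step t E x) ps) t p q)"
    using Cons.IH by blast
  show ?case using 1 2 IH tpath_mono x by auto
qed

lemma greedy_tspanner:
  assumes "t \<ge> 1" "greedy_spanner S t G" "u \<in> S" "w \<in> S"
  shows "has_tpath G t u w"
proof (cases "u = w")
  case True then show ?thesis using tpath_refl by simp
next
  case False
  obtain ps where ps: "set (map (\<lambda>(p,q). {p,q}) ps) = {{p,q} | p q. p \<in> S \<and> q \<in> S \<and> p \<noteq> q}"
     "G = foldl (greedy_step t) {} ps"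
    using assms(2) unfolding greedy_spanner_def by blast
  have "{u, w} \<in> set (map (\<lambda>(p,q). {p,q}) ps)" using ps(1) assms False by blast
  then obtain p q where pq: "(p, q) \<in> set ps" "{p, q} = {u, w}" by auto
  have "has_tpath G t p q" using foldl_greedy[OF assms(1), of "{}" ps] pq ps(2) by auto
  then show ?thesis using pq(2) tpath_rev by (metis doubleton_eq_iff)
qed

definition binv :: "graph \<Rightarrow> pt set \<Rightarrow> pt set \<Rightarrow> graph \<times> pt list set \<Rightarrow> bool" where
  "binv E0 Qi Qj st \<longleftrightarrow> E0 \<subseteq> fst st \<and>
     (\<forall>br\<in>snd st. is_path (fst st) br (hd br) (last br) \<and> hd br \<in> Qi \<and> last br \<in> Qj)"

lemma merge_step_inv:
  assumes step: "merge_step t st (u, v) st1" and inv: "binv E0 Qi Qj st"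
    and Ii: "\<forall>x\<in>Qi. \<forall>y\<in>Qi. has_tpath E0 t x y"
    and Ij: "\<forall>x\<in>Qj. \<forall>y\<in>Qj. has_tpath E0 t x y"
    and uv: "u \<in> Qi" "v \<in> Qj" and t: "t \<ge> 1"
  shows "fst st \<subseteq> fst st1 \<and> binv E0 Qi Qj st1 \<and> has_tpath (fst st1) t u v"
proof -
  obtain E B where st: "st = (E, B)" by (metis surj_pair)
  show ?thesis
  proof (cases "\<exists>br\<in>B. t * dist u (hd br) + path_len br + t * dist (last br) v \<le> t * dist u v")
    case True
    then obtain br where br: "br \<in> B" "t * dist u (hd br) + path_len br + t * dist (last br) v \<le> t * dist u v"
      by blast
    have st1: "st1 = st" using step True unfolding merge_step_def st by simp
    have E0E: "E0 \<subseteq> E" and brp: "is_path E br (hd br) (last br)" "hd br \<in> Qi" "last br \<in> Qj"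
      using inv br(1) unfolding binv_def st by auto
    obtain p1 where p1: "is_path E0 p1 u (hd br)" "path_len p1 \<le> t * dist u (hd br)"
      using Ii uv brp unfolding has_tpath_def is_tpath_def by blast
    obtain p2 where p2: "is_path E0 p2 (last br) v" "path_len p2 \<le> t * dist (last br) v"
      using Ij uv brp unfolding has_tpath_def is_tpath_def by blast
    have c1: "is_path E (p1 @ tl br) u (last br) \<and> path_len (p1 @ tl br) = path_len p1 + path_len br"
      using path_cat[OF path_mono[OF p1(1) E0E] brp(1)] .
    have c2: "is_path E ((p1 @ tl br) @ tl p2) u v \<and> path_len ((p1 @ tl br) @ tl p2) = path_len (p1 @ tl br) + path_len p2"
      using path_cat[OF conjunct1[OF c1] path_mono[OF p2(1) E0E]] .
    have "is_tpath E t ((p1 @ tl br) @ tl p2) u v"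
      unfolding is_tpath_def using c1 c2 p1(2) p2(2) br(2) by linarith
    then show ?thesis using inv unfolding st1 st has_tpath_def by auto
  next
    case False
    note F = False
    show ?thesis
    proof (cases "has_tpath E t u v")
      case True
      then obtain ps where ps: "is_tpath E t ps u v" "st1 = (E, insert ps B)"
        using step F unfolding merge_step_def st by auto
      have "hd ps = u" "last ps = v" "is_path E ps u v" using ps(1) unfolding is_tpath_def is_path_def by auto
      then show ?thesis using inv uv ps True unfolding binv_def st by auto
    next
      case False
      then have st1: "st1 = (insert {u,v} E, insert [u,v] B)"
        using step F unfolding merge_step_def st by auto
      have e: "is_tpath (insert {u,v} E) t [u,v] u v" using tpath_edge[OF t] by simp
      have "is_path (insert {u,v} E) [u,v] u v" using e unfolding is_tpath_def by simp
      moreover have "\<forall>br\<in>B. is_path (insert {u,v} E) br (hd br) (last br) \<and> hd br \<in> Qi \<and> last br \<in> Qj"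
      proof
        fix br assume "br \<in> B"
        then have "is_path E br (hd br) (last br) \<and> hd br \<in> Qi \<and> last br \<in> Qj"
          using inv unfolding binv_def st by auto
        then show "is_path (insert {u,v} E) br (hd br) (last br) \<and> hd br \<in> Qi \<and> last br \<in> Qj"
          using path_mono[of E br "hd br" "last br" "insert {u,v} E"] by auto
      qed
      ultimately show ?thesis using inv uv e unfolding binv_def st1 st has_tpath_def by auto
    qed
  qed
qed

lemma merge_run_inv:
  assumes "merge_run t ps st st2" "binv E0 Qi Qj st" "set ps \<subseteq> Qi \<times> Qj"
    and Ii: "\<forall>x\<in>Qi. \<forall>y\<in>Qi. has_tpath E0 t x y"
    and Ij: "\<forall>x\<in>Qj. \<forall>y\<in>Qj. has_tpath E0 t x y" and t: "t \<ge> 1"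
  shows "fst st \<subseteq> fst st2 \<and> binv E0 Qi Qj st2 \<and> (\<forall>(u,v)\<in>set ps. has_tpath (fst st2) t u v)"
  using assms(1-3)
proof (induction rule: merge_run.induct)
  case (nil st)
  then show ?case by simp
next
  case (cons st uv st1 ps st2)
  obtain u v where uv: "uv = (u, v)" by (metis surj_pair)
  have s: "fst st \<subseteq> fst st1 \<and> binv E0 Qi Qj st1 \<and> has_tpath (fst st1) t u v"
    using merge_step_inv[OF cons.hyps(1)[unfolded uv] cons.prems(1) Ii Ij _ _ t] cons.prems(2) uv by auto
  have r: "fst st1 \<subseteq> fst st2 \<and> binv E0 Qi Qj st2 \<and> (\<forall>(u,v)\<in>set ps. has_tpath (fst st2) t u v)"
    using cons.IH s cons.prems(2) by auto
  have "has_tpath (fst st2) t u v" using s r tpath_mono[of "fst st1" t u v "fst st2"] by blast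
  then show ?case using s r uv by auto
qed

lemma merge_leaves_inv:
  assumes "merge_leaves t Qi Qj E E'" "E0 \<subseteq> E"
    and Ii: "\<forall>x\<in>Qi. \<forall>y\<in>Qi. has_tpath E0 t x y"
    and Ij: "\<forall>x\<in>Qj. \<forall>y\<in>Qj. has_tpath E0 t x y" and t: "t \<ge> 1"
  shows "E \<subseteq> E' \<and> (\<forall>u\<in>Qi. \<forall>v\<in>Qj. has_tpath E' t u v)"
proof -
  obtain ps B' where ps: "set ps = Qi \<times> Qj" "merge_run t ps (E, {}) (E', B')"
    using assms(1) unfolding merge_leaves_def by blast
  have "binv E0 Qi Qj (E, {})" using assms(2) unfolding binv_def by simp
  from merge_run_inv[OF ps(2) this _ Ii Ij t] ps(1) show ?thesis by auto
qed

lemma merges_run_inv: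
  assumes "merges_run P t ls E E2" "E0 \<subseteq> E"
    and I: "\<forall>a. ne_leaf P k a \<longrightarrow> (\<forall>x\<in>P \<inter> qsq P a. \<forall>y\<in>P \<inter> qsq P a. has_tpath E0 t x y)"
    and L: "\<forall>(a,b)\<in>set ls. ne_leaf P k a \<and> ne_leaf P k b" and t: "t \<ge> 1"
  shows "E \<subseteq> E2 \<and> (\<forall>(a,b)\<in>set ls. \<forall>u\<in>P \<inter> qsq P a. \<forall>v\<in>P \<inter> qsq P b. has_tpath E2 t u v)"
  using assms(1,2,4)
proof (induction rule: merges_run.induct)
  case (nil E)
  then show ?case by simp
next
  case (cons a b E E1 ls E2)
  have s: "E \<subseteq> E1 \<and> (\<forall>u\<in>P \<inter> qsq P a. \<forall>v\<in>P \<inter> qsq P b. has_tpath E1 t u v)"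
  proof -
    have ab: "ne_leaf P k a" "ne_leaf P k b" using cons.prems(2) by auto
    have Ia: "\<forall>x\<in>P \<inter> qsq P a. \<forall>y\<in>P \<inter> qsq P a. has_tpath E0 t x y"
      using I ab(1) by blast
    have Ib: "\<forall>x\<in>P \<inter> qsq P b. \<forall>y\<in>P \<inter> qsq P b. has_tpath E0 t x y"
      using I ab(2) by blast
    show ?thesis using merge_leaves_inv[OF cons.hyps(1) cons.prems(1) Ia Ib t] .
  qed
  have r: "E1 \<subseteq> E2 \<and> (\<forall>(a,b)\<in>set ls. \<forall>u\<in>P \<inter> qsq P a. \<forall>v\<in>P \<inter> qsq P b. has_tpath E2 t u v)"
  proof -
    have E01: "E0 \<subseteq> E1" using s cons.prems(1) by blast
    have L': "\<forall>(a,b)\<in>set ls. ne_leaf P k a \<and> ne_leaf P k b" using cons.prems(2) by simp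
    show ?thesis using cons.IH[OF E01 L'] .
  qed
  have "\<forall>u\<in>P \<inter> qsq P a. \<forall>v\<in>P \<inter> qsq P b. has_tpath E2 t u v"
  proof (intro ballI)
    fix u v assume "u \<in> P \<inter> qsq P a" "v \<in> P \<inter> qsq P b"
    then have "has_tpath E1 t u v" using s by blast
    then show "has_tpath E2 t u v" using r tpath_mono[of E1 t u v E2] by blast
  qed
  then show ?case using s r by auto
qed


fun cc :: "real \<Rightarrow> real \<Rightarrow> real \<Rightarrow> nat \<Rightarrow> nat" where
  "cc x0 s z 0 = 0"
| "cc x0 s z (Suc d) = 2 * cc x0 s z d + (if x0 + real (2 * cc x0 s z d + 1) * s / 2 ^ Suc d \<le> z then 1 else 0)"

lemma cc_bound: "cc x0 s z d < 2 ^ d"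
  by (induction d) auto

lemma cc_div: "d' \<le> d \<Longrightarrow> cc x0 s z d div 2 ^ (d - d') = cc x0 s z d'"
proof (induction d)
  case 0 then show ?case by simp
next
  case (Suc d)
  show ?case
  proof (cases "d' = Suc d")
    case True then show ?thesis by simp
  next
    case False
    then have d': "d' \<le> d" using Suc.prems by simp
    have e: "Suc d - d' = Suc (d - d')" using d' by simp
    have "cc x0 s z (Suc d) div 2 ^ (Suc d - d') = (cc x0 s z (Suc d) div 2) div 2 ^ (d - d')"
      unfolding e by (simp add: div_mult2_eq)
    also have "cc x0 s z (Suc d) div 2 = cc x0 s z d" by simp
    finally show ?thesis using Suc.IH[OF d'] by simp
  qed
qed

lemma cc_in:
  assumes "x0 \<le> z" "z \<le> x0 + s"
  shows "x0 + real (cc x0 s z d) * (s / 2 ^ d) \<le> z \<and> z \<le> x0 + real (cc x0 s z d + 1) * (s / 2 ^ d)"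
proof (induction d)
  case 0 then show ?case using assms by simp
next
  case (Suc d)
  define c where "c = cc x0 s z d"
  define h where "h = s / 2 ^ Suc d"
  have sh: "s / 2 ^ d = 2 * h" unfolding h_def by simp
  have IH: "x0 + real c * (2 * h) \<le> z" "z \<le> x0 + real (c + 1) * (2 * h)"
    using Suc.IH unfolding c_def[symmetric] sh by auto
  show ?case
  proof (cases "x0 + real (2 * c + 1) * s / 2 ^ Suc d \<le> z")
    case True
    then have cs: "cc x0 s z (Suc d) = 2 * c + 1" unfolding c_def by simp
    have "x0 + (2 * real c + 1) * h \<le> z" using True unfolding h_def by (simp add: ac_simps)
    then show ?thesis unfolding cs h_def[symmetric] using IH by (simp add: algebra_simps)
  next
    case False
    then have cs: "cc x0 s z (Suc d) = 2 * c" unfolding c_def by simp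
    have "\<not> x0 + (2 * real c + 1) * h \<le> z" using False unfolding h_def by (simp add: ac_simps)
    then show ?thesis unfolding cs h_def[symmetric] using IH by (simp add: algebra_simps)
  qed
qed

lemma root_bounds:
  assumes "finite P" "p \<in> P"
  shows "root_x P \<le> fst p \<and> fst p \<le> root_x P + root_side P \<and>
         root_y P \<le> snd p \<and> snd p \<le> root_y P + root_side P"
proof -
  have "Min (fst ` P) \<le> fst p" "fst p \<le> Max (fst ` P)"
       "Min (snd ` P) \<le> snd p" "snd p \<le> Max (snd ` P)"
    using assms by auto
  then show ?thesis unfolding root_x_def root_y_def root_side_def by linarith
qed

definition pcell :: "pt set \<Rightarrow> pt \<Rightarrow> nat \<Rightarrow> nat \<times> nat \<times> nat" where
  "pcell P p d = (d, cc (root_x P) (root_side P) (fst p) d, cc (root_y P) (root_side P) (snd p) d)"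

lemma pcell_in:
  assumes "finite P" "p \<in> P"
  shows "p \<in> qsq P (pcell P p d)"
proof -
  note rb = root_bounds[OF assms]
  have x: "root_x P + real (cc (root_x P) (root_side P) (fst p) d) * (root_side P / 2 ^ d) \<le> fst p \<and>
      fst p \<le> root_x P + real (cc (root_x P) (root_side P) (fst p) d + 1) * (root_side P / 2 ^ d)"
    using cc_in rb by blast
  have y: "root_y P + real (cc (root_y P) (root_side P) (snd p) d) * (root_side P / 2 ^ d) \<le> snd p \<and>
      snd p \<le> root_y P + real (cc (root_y P) (root_side P) (snd p) d + 1) * (root_side P / 2 ^ d)"
    using cc_in rb by blast
  show ?thesis using x y unfolding pcell_def qsq_def by (cases p) (simp add: mult.commute)
qed

lemma cell_diam:
  assumes "p \<in> qsq P (d, i, j)" "q \<in> qsq P (d, i, j)"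
  shows "dist p q \<le> 2 * (root_side P / 2 ^ d)"
proof -
  define h where "h = root_side P / 2 ^ d"
  have e: "\<And>n. real n * root_side P / 2 ^ d = real n * h" unfolding h_def by simp
  obtain a b where p: "p = (a, b)" by (metis surj_pair)
  obtain c e' where q: "q = (c, e')" by (metis surj_pair)
  have B: "root_x P + real i * root_side P / 2 ^ d \<le> a" "a \<le> root_x P + real (i + 1) * root_side P / 2 ^ d"
     "root_y P + real j * root_side P / 2 ^ d \<le> b" "b \<le> root_y P + real (j + 1) * root_side P / 2 ^ d"
     "root_x P + real i * root_side P / 2 ^ d \<le> c" "c \<le> root_x P + real (i + 1) * root_side P / 2 ^ d"
     "root_y P + real j * root_side P / 2 ^ d \<le> e'" "e' \<le> root_y P + real (j + 1) * root_side P / 2 ^ d"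
    using assms unfolding p q qsq_def by auto
  have K: "\<And>n. real (n + 1) * root_side P / 2 ^ d = real n * root_side P / 2 ^ d + h"
    unfolding h_def by (simp add: field_simps)
  have "\<bar>a - c\<bar> \<le> h" "\<bar>b - e'\<bar> \<le> h" using B unfolding K by auto
  then have "sqrt ((dist a c)\<^sup>2 + (dist b e')\<^sup>2) \<le> 2 * h"
    using sqrt_sum_squares_le_sum_abs[of "dist a c" "dist b e'"] unfolding dist_real_def by linarith
  then show ?thesis unfolding p q dist_Pair_Pair h_def .
qed

lemma depth_bound:
  assumes "finite P"
  shows "\<exists>D. \<forall>d\<ge>D. \<forall>i j. card (P \<inter> qsq P (d, i, j)) \<le> 1"
proof -
  define Q where "Q = {pq \<in> P \<times> P. fst pq \<noteq> snd pq}"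
  have fQ: "finite Q" unfolding Q_def using assms by auto
  have "\<forall>pq\<in>Q. eventually (\<lambda>d. 2 * root_side P / 2 ^ d < dist (fst pq) (snd pq)) sequentially"
  proof
    fix pq assume "pq \<in> Q"
    then have "0 < dist (fst pq) (snd pq)" unfolding Q_def by auto
    then show "eventually (\<lambda>d. 2 * root_side P / 2 ^ d < dist (fst pq) (snd pq)) sequentially"
      using order_tendstoD(2)[OF LIMSEQ_divide_realpow_zero[of "2::real" "2 * root_side P"]] by simp
  qed
  from eventually_ball_finite[OF fQ this]
  obtain D where D: "\<And>d. d \<ge> D \<Longrightarrow> \<forall>pq\<in>Q. 2 * root_side P / 2 ^ d < dist (fst pq) (snd pq)"
    unfolding eventually_sequentially by blast
  have "\<forall>d\<ge>D. \<forall>i j. card (P \<inter> qsq P (d, i, j)) \<le> 1"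
  proof (intro allI impI)
    fix d i j assume "D \<le> d"
    have "\<forall>a\<in>P \<inter> qsq P (d, i, j). \<forall>b\<in>P \<inter> qsq P (d, i, j). a = b"
    proof (intro ballI, rule ccontr)
      fix a b assume ab: "a \<in> P \<inter> qsq P (d, i, j)" "b \<in> P \<inter> qsq P (d, i, j)" "a \<noteq> b"
      then have "(a, b) \<in> Q" unfolding Q_def by auto
      then have "2 * root_side P / 2 ^ d < dist a b" using D[OF \<open>D \<le> d\<close>] by auto
      moreover have "dist a b \<le> 2 * (root_side P / 2 ^ d)" using cell_diam ab by blast
      ultimately show False by simp
    qed
    then show "card (P \<inter> qsq P (d, i, j)) \<le> 1"
      using card_le_Suc0_iff_eq[of "P \<inter> qsq P (d, i, j)"] assms by auto
  qed
  then show ?thesis by blast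
qed


lemma leaves_finite:
  assumes "finite P" "k > 0"
  shows "finite {n. qt_leaf P k n}"
proof -
  obtain D where D: "\<And>d i j. d \<ge> D \<Longrightarrow> card (P \<inter> qsq P (d, i, j)) \<le> 1"
    using depth_bound[OF assms(1)] by blast
  have "{n. qt_leaf P k n} \<subseteq> {..D} \<times> {..<2^D} \<times> {..<2^D}"
  proof
    fix n assume "n \<in> {n. qt_leaf P k n}"
    moreover obtain d i j where n: "n = (d, i, j)" by (metis prod_cases3)
    ultimately have nd: "qt_node P k (d, i, j)" unfolding qt_leaf_def by simp
    have "d \<le> D"
    proof (rule ccontr)
      assume "\<not> d \<le> D"
      then have "k < card (P \<inter> qsq P (D, i div 2^(d-D), j div 2^(d-D)))"
        using nd unfolding qt_node_def by auto
      moreover have "card (P \<inter> qsq P (D, i div 2^(d-D), j div 2^(d-D))) \<le> 1" using D by simp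
      ultimately show False using assms(2) by simp
    qed
    moreover have "i < 2^d" "j < 2^d" using nd unfolding qt_node_def by auto
    moreover have p2: "(2::nat)^d \<le> 2^D" using \<open>d \<le> D\<close> by (simp add: power_increasing)
    ultimately have "d \<le> D" "i < 2^D" "j < 2^D" using less_le_trans[OF _ p2] by auto
    then show "n \<in> {..D} \<times> {..<2^D} \<times> {..<2^D}" unfolding n by auto
  qed
  then show ?thesis by (rule finite_subset) auto
qed

lemma point_leaf:
  assumes "finite P" "k > 0" "p \<in> P"
  shows "\<exists>\<sigma>. ne_leaf P k \<sigma> \<and> p \<in> qsq P \<sigma>"
proof -
  obtain D where D: "\<And>d i j. d \<ge> D \<Longrightarrow> card (P \<inter> qsq P (d, i, j)) \<le> 1"
    using depth_bound[OF assms(1)] by blast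
  define C where "C d = card (P \<inter> qsq P (pcell P p d))" for d
  have "C D \<le> 1" unfolding C_def pcell_def by (rule D) simp
  then have ex: "C D \<le> k" using assms(2) by simp
  define d0 where "d0 = (LEAST d. C d \<le> k)"
  have d0: "C d0 \<le> k" unfolding d0_def using LeastI[of "\<lambda>d. C d \<le> k", OF ex] .
  have lt: "\<And>d'. d' < d0 \<Longrightarrow> k < C d'" unfolding d0_def using not_less_Least by (metis not_le)
  have node: "qt_node P k (pcell P p d0)"
    unfolding qt_node_def pcell_def
  proof (simp only: prod.case, intro conjI allI impI)
    show "cc (root_x P) (root_side P) (fst p) d0 < 2 ^ d0" by (rule cc_bound)
    show "cc (root_y P) (root_side P) (snd p) d0 < 2 ^ d0" by (rule cc_bound)
    fix d' assume "d' < d0"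
    then show "k < card (P \<inter> qsq P (d', cc (root_x P) (root_side P) (fst p) d0 div 2 ^ (d0 - d'),
                  cc (root_y P) (root_side P) (snd p) d0 div 2 ^ (d0 - d')))"
      using lt[of d'] unfolding C_def pcell_def by (simp add: cc_div)
  qed
  have "p \<in> qsq P (pcell P p d0)" using pcell_in assms by blast
  then show ?thesis using node d0 assms(3) unfolding ne_leaf_def qt_leaf_def C_def by blast
qed

theorem theorem3:
  fixes P :: "pt set" and t t' :: real and k :: nat and H :: graph
  assumes "finite P" and "t > 1" and "t' \<ge> t" and "k > 0"
    and "fss_output P t t' k (qt_diameter P k) H"
  shows "t_spanner P t H"
proof -
  have t: "t \<ge> 1" using assms(2) by simp
  obtain gs ld Ew ls where
    gs: "\<forall>\<sigma>. ne_leaf P k \<sigma> \<longrightarrow> greedy_spanner (P \<inter> qsq P \<sigma>) t (gs \<sigma>)" and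
    sch: "merge_schedule P k (qt_diameter P k) ls" and
    run: "merges_run P t ls ((\<Union>\<sigma>\<in>{\<sigma>. ne_leaf P k \<sigma>}. gs \<sigma>) \<union> Ew) H"
    using assms(5) unfolding fss_output_def by blast
  define G0 where "G0 = (\<Union>\<sigma>\<in>{\<sigma>. ne_leaf P k \<sigma>}. gs \<sigma>) \<union> Ew"
  have I: "\<forall>a. ne_leaf P k a \<longrightarrow> (\<forall>x\<in>P \<inter> qsq P a. \<forall>y\<in>P \<inter> qsq P a. has_tpath G0 t x y)"
  proof (intro allI impI ballI)
    fix a x y assume a: "ne_leaf P k a" and xy: "x \<in> P \<inter> qsq P a" "y \<in> P \<inter> qsq P a"
    have "has_tpath (gs a) t x y" using greedy_tspanner[OF t _ xy] gs a by blast
    moreover have "gs a \<subseteq> G0" unfolding G0_def using a by blast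
    ultimately show "has_tpath G0 t x y" using tpath_mono by blast
  qed
  have sch1: "set (map (\<lambda>(a,b). {a,b}) ls) =
        {{a,b} | a b. ne_leaf P k a \<and> ne_leaf P k b \<and> a \<noteq> b \<and> qt_hop P k a b \<le> qt_diameter P k}"
    using sch unfolding merge_schedule_def by blast
  have L: "\<forall>(a,b)\<in>set ls. ne_leaf P k a \<and> ne_leaf P k b"
  proof
    fix x assume "x \<in> set ls"
    moreover obtain a b where x: "x = (a, b)" by (metis surj_pair)
    ultimately have "{a,b} \<in> set (map (\<lambda>(a,b). {a,b}) ls)" by force
    then obtain a' b' where "{a,b} = {a',b'}" "ne_leaf P k a'" "ne_leaf P k b'"
      unfolding sch1 by blast
    then have "ne_leaf P k a \<and> ne_leaf P k b" by (metis doubleton_eq_iff)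
    then show "case x of (a,b) \<Rightarrow> ne_leaf P k a \<and> ne_leaf P k b" using x by simp
  qed
  have R: "G0 \<subseteq> H \<and> (\<forall>(a,b)\<in>set ls. \<forall>u\<in>P \<inter> qsq P a. \<forall>v\<in>P \<inter> qsq P b. has_tpath H t u v)"
    using merges_run_inv[OF run[folded G0_def] order_refl I L t] .
  have fin: "finite {qt_hop P k a b | a b. qt_leaf P k a \<and> qt_leaf P k b}"
  proof -
    have "{qt_hop P k a b | a b. qt_leaf P k a \<and> qt_leaf P k b} \<subseteq>
       (\<lambda>(a,b). qt_hop P k a b) ` ({n. qt_leaf P k n} \<times> {n. qt_leaf P k n})" by auto
    then show ?thesis using leaves_finite[OF assms(1,4)] finite_subset by blast
  qed
  show ?thesis unfolding t_spanner_def
  proof (intro ballI)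
    fix p q assume pq: "p \<in> P" "q \<in> P"
    obtain a where a: "ne_leaf P k a" "p \<in> qsq P a" using point_leaf[OF assms(1,4) pq(1)] by blast
    obtain b where b: "ne_leaf P k b" "q \<in> qsq P b" using point_leaf[OF assms(1,4) pq(2)] by blast
    show "has_tpath H t p q"
    proof (cases "a = b")
      case True
      then have "has_tpath G0 t p q" using I a b pq by blast
      then show ?thesis using R tpath_mono by blast
    next
      case False
      have "qt_hop P k a b \<le> qt_diameter P k"
      proof -
        have "qt_hop P k a b \<in> {qt_hop P k a b | a b. qt_leaf P k a \<and> qt_leaf P k b}"
          using a(1) b(1) unfolding ne_leaf_def by blast
        then show ?thesis unfolding qt_diameter_def using Max_ge[OF fin] by blast
      qed
      then have "{a,b} \<in> set (map (\<lambda>(a,b). {a,b}) ls)" unfolding sch1 using a b False by blast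
      then obtain a' b' where ab': "(a', b') \<in> set ls" "{a',b'} = {a,b}" by auto
      show ?thesis
      proof (cases "a' = a")
        case True
        then have "b' = b" using ab'(2) False by (metis doubleton_eq_iff)
        then show ?thesis using R ab'(1) True a b pq by fastforce
      next
        case False
        then have "a' = b" "b' = a" using ab'(2) by (metis doubleton_eq_iff)+
        then have "has_tpath H t q p" using R ab'(1) a b pq by fastforce
        then show ?thesis by (rule tpath_rev)
      qed
    qed
  qed
qed

end
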